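(* Let $T:X\rightrightarrows X^*$ be a pre-maximal pseudomonotone operator. Then $T$ is $D$-maximal pseudomonotone if and only if $\widehat{T}=T^\rho_D$.
   Context: $X$ is a real Banach space with dual $X^*$ and pairing $\langle x,x^*\rangle=x^*(x)$. A multivalued operator $T:X\rightrightarrows X^*$ is identified with its graph $T\subset X\times X^*$; $T(x)=\{x^*:(x,x^* )\in T\}$, $\mathrm{dom}(T)=\{x:T(x)\ne\emptyset\}$, $Z_T=\{x:0\in T(x)\}$. For $A\subset X^*$, $\operatorname{cone}(A)=\{tv:t\ge0,v\in A\}$ and $\operatorname{cone}_\circ(A)=\{tv:t>0,v\in A\}$. For $C\subset X$, $N_C(x)=\{x^*: \langle y-x,x^*\rangle\le0\ \forall y\in C\}$. For $(x,x^* ),(y,y^* )\in X\times X^*$, write $(x,x^* )\sim_p(y,y^* )$ if either $\min\{\langle x-y,y^*\rangle,\langle y-x,x^*\rangle\}<0$ or $\langle x-y,y^*\rangle=\langle y-x,x^*\rangle=0$. The pseudomonotone polar is $T^\rho=\{(x,x^* ): (x,x^* )\sim_p(y,y^* )\ \forall (y,y^* )\in T\}$, and $T^\rho_D$ denotes its restriction to $\mathrm{dom}(T)$. $T$ is pseudomonotone if for all $(x,x^* ),(y,y^* )\in T$, $\langle y-x,x^*\rangle\ge0$ implies $\langle y-x,y^*\rangle\ge0$; $T$ is pre-maximal pseudomonotone if both $T$ and $T^\rho$ are pseudomonotone. Two operators $T,S$ are equivalent if $\mathrm{dom}(T)=\mathrm{dom}(S)$, $Z_T=Z_S$ and $\operatorname{cone}(T(x))=\operatorname{cone}(S(x))$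 for all $x\in\mathrm{dom}(T)\setminus Z_T$. $T$ is $D$-maximal pseudomonotone if $T$ is pseudomonotone and there is a pseudomonotone operator $S$ equivalent to $T$ which has no proper pseudomonotone extension with the same domain. For $x\in Z_T$, $L(T,x)=\{y\in X:\exists y^*\in T(y),\ \langle x-y,y^*\rangle\ge0\}$, and $\widehat T(x)=N_{L(T,x)}(x)$ if $x\in Z_T$, $\widehat T(x)=\operatorname{cone}_\circ(T(x))$ if $x\in\mathrm{dom}(T)\setminus Z_T$, $\widehat T(x)=\emptyset$ if $x\notin\mathrm{dom}(T)$. *)

theory Defs
  imports "HOL-Analysis.Analysis"
begin

text \<open>X is a real Banach space 'a::banach; its dual X* is the space of bounded
linear functionals (blinfun). The pairing is blinfun_apply.
A multivalued operator is identified with its graph.\<close>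

type_synonym 'a mop = "('a \<times> ('a \<Rightarrow>\<^sub>L real)) set"

definition opval :: "('a::real_normed_vector) mop \<Rightarrow> 'a \<Rightarrow> ('a \<Rightarrow>\<^sub>L real) set" where
  "opval T x = {xs. (x, xs) \<in> T}"

definition opdom :: "('a::real_normed_vector) mop \<Rightarrow> 'a set" where
  "opdom T = {x. opval T x \<noteq> {}}"

definition zeros :: "('a::real_normed_vector) mop \<Rightarrow> 'a set" where
  "zeros T = {x. 0 \<in> opval T x}"

definition dcone :: "('a::real_vector) set \<Rightarrow> 'a set" where
  "dcone A = {t *\<^sub>R v | t v. t \<ge> 0 \<and> v \<in> A}"

definition dcone_pos :: "('a::real_vector) set \<Rightarrow> 'a set" where
  "dcone_pos A = {t *\<^sub>R v | t v. t > 0 \<and> v \<in> A}"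

definition normal_cone :: "('a::real_normed_vector) set \<Rightarrow> 'a \<Rightarrow> ('a \<Rightarrow>\<^sub>L real) set" where
  "normal_cone C x = {xs. \<forall>y\<in>C. blinfun_apply xs (y - x) \<le> 0}"

definition psim :: "('a::real_normed_vector) \<times> ('a \<Rightarrow>\<^sub>L real) \<Rightarrow> 'a \<times> ('a \<Rightarrow>\<^sub>L real) \<Rightarrow> bool" where
  "psim p q = (let (x, xs) = p; (y, ys) = q in
     min (blinfun_apply ys (x - y)) (blinfun_apply xs (y - x)) < 0 \<or>
     (blinfun_apply ys (x - y) = 0 \<and> blinfun_apply xs (y - x) = 0))"

definition pm_polar :: "('a::real_normed_vector) mop \<Rightarrow> 'a mop" where
  "pm_polar T = {p. \<forall>q\<in>T. psim p q}"

definition pm_polar_D :: "('a::real_normed_vector) mop \<Rightarrow> 'a mop" where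
  "pm_polar_D T = {(x, xs). (x, xs) \<in> pm_polar T \<and> x \<in> opdom T}"

definition pseudomonotone :: "('a::real_normed_vector) mop \<Rightarrow> bool" where
  "pseudomonotone T \<longleftrightarrow> (\<forall>x xs y ys. (x, xs) \<in> T \<longrightarrow> (y, ys) \<in> T \<longrightarrow>
      blinfun_apply xs (y - x) \<ge> 0 \<longrightarrow> blinfun_apply ys (y - x) \<ge> 0)"

definition pre_maximal_pm :: "('a::real_normed_vector) mop \<Rightarrow> bool" where
  "pre_maximal_pm T \<longleftrightarrow> pseudomonotone T \<and> pseudomonotone (pm_polar T)"

definition op_equiv :: "('a::real_normed_vector) mop \<Rightarrow> 'a mop \<Rightarrow> bool" where
  "op_equiv T S \<longleftrightarrow> opdom T = opdom S \<and> zeros T = zeros S \<and>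
     (\<forall>x \<in> opdom T - zeros T. dcone (opval T x) = dcone (opval S x))"

definition D_maximal_pm :: "('a::real_normed_vector) mop \<Rightarrow> bool" where
  "D_maximal_pm T \<longleftrightarrow> pseudomonotone T \<and>
     (\<exists>S. pseudomonotone S \<and> op_equiv T S \<and>
        \<not> (\<exists>S'. pseudomonotone S' \<and> S \<subset> S' \<and> opdom S' = opdom S))"

definition Lset :: "('a::real_normed_vector) mop \<Rightarrow> 'a \<Rightarrow> 'a set" where
  "Lset T x = {y. \<exists>ys \<in> opval T y. blinfun_apply ys (x - y) \<ge> 0}"

definition That :: "('a::real_normed_vector) mop \<Rightarrow> 'a mop" where
  "That T = {(x, xs).
     (x \<in> zeros T \<and> xs \<in> normal_cone (Lset T x) x) \<or>
     (x \<in> opdom T - zeros T \<and> xs \<in> dcone_pos (opval T x))}"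

end

theory Submission
  imports Defs
begin

lemma psim_iff: "psim (x, xs) (y, ys) \<longleftrightarrow>
   (blinfun_apply ys (x - y) < 0 \<or> blinfun_apply xs (y - x) < 0 \<or>
    (blinfun_apply ys (x - y) = 0 \<and> blinfun_apply xs (y - x) = 0))"
  unfolding psim_def by (auto simp: min_def)

lemma neg_sw: "blinfun_apply (f::'a::real_normed_vector \<Rightarrow>\<^sub>L real) (y - x) = - blinfun_apply f (x - y)"
  by (simp add: blinfun.diff_right)

lemma pm_psim:
  assumes "pseudomonotone T" "(x, xs) \<in> T" "(y, ys) \<in> T"
  shows "psim (x, xs) (y, ys)"
proof -
  have 1: "xs (y - x) \<ge> 0 \<Longrightarrow> ys (y - x) \<ge> 0" using assms unfolding pseudomonotone_def by blast
  have 2: "ys (x - y) \<ge> 0 \<Longrightarrow> xs (x - y) \<ge> 0" using assms unfolding pseudomonotone_def by blast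
  show ?thesis using 1 2 unfolding psim_iff neg_sw[of xs y x] neg_sw[of ys y x] by linarith
qed

lemma psim_sym: "psim p q \<Longrightarrow> psim q p"
  by (cases p; cases q) (auto simp: psim_iff)

lemma psim_scale2: "t > 0 \<Longrightarrow> psim (x, xs) (y, ys) \<Longrightarrow> psim (x, xs) (y, t *\<^sub>R ys)"
  by (auto simp: psim_iff mult_less_0_iff scaleR_blinfun.rep_eq)

lemma psim_scale1: "t > 0 \<Longrightarrow> psim (x, xs) (y, ys) \<Longrightarrow> psim (x, t *\<^sub>R xs) (y, ys)"
  by (auto simp: psim_iff mult_less_0_iff scaleR_blinfun.rep_eq)

lemma psim_pm:
  assumes "psim (x, xs) (y, ys)"
  shows "(xs (y - x) \<ge> 0 \<longrightarrow> ys (y - x) \<ge> 0) \<and> (ys (x - y) \<ge> 0 \<longrightarrow> xs (x - y) \<ge> 0)"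
  using assms unfolding psim_iff neg_sw[of xs y x] neg_sw[of ys y x] by linarith

lemma pm_insert:
  assumes "pseudomonotone S" "\<forall>q\<in>S. psim (x, xs) q"
  shows "pseudomonotone (insert (x, xs) S)"
  unfolding pseudomonotone_def
proof (intro allI impI)
  fix a as b bs
  assume a: "(a, as) \<in> insert (x, xs) S" and b: "(b, bs) \<in> insert (x, xs) S" and c: "0 \<le> as (b - a)"
  show "0 \<le> bs (b - a)"
  proof (cases "(a, as) = (x, xs)")
    case True
    then show ?thesis
    proof (cases "(b, bs) = (x, xs)")
      case True with \<open>(a, as) = (x, xs)\<close> show ?thesis by simp
    next
      case False
      then have "(b, bs) \<in> S" using b by auto
      then show ?thesis using psim_pm[of a as b bs] assms(2) True c by auto
    qed
  next
    case False
    then have aS: "(a, as) \<in> S" using a by auto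
    show ?thesis
    proof (cases "(b, bs) = (x, xs)")
      case True
      have "psim (b, bs) (a, as)" using assms(2) aS True by auto
      then show ?thesis using psim_pm[of b bs a as] c by auto
    next
      case False
      then have "(b, bs) \<in> S" using b by auto
      then show ?thesis using assms(1) aS c unfolding pseudomonotone_def by blast
    qed
  qed
qed

lemma pm_subset_polar: "pseudomonotone T \<Longrightarrow> T \<subseteq> pm_polar T"
  unfolding pm_polar_def using pm_psim by fast

lemma pm_subset_polarD: "pseudomonotone T \<Longrightarrow> T \<subseteq> pm_polar_D T"
  using pm_subset_polar[of T] unfolding pm_polar_D_def opdom_def opval_def by auto

lemma pm_mono: "pseudomonotone T \<Longrightarrow> S \<subseteq> T \<Longrightarrow> pseudomonotone S"
  unfolding pseudomonotone_def by blast

lemma dcone_pos_eq: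
  assumes "dcone A = dcone B" "0 \<notin> A" "0 \<notin> B"
  shows "dcone_pos A = dcone_pos B"
proof -
  have "dcone_pos C = dcone C - {0}" if "0 \<notin> C" for C :: "'a set"
    using that unfolding dcone_pos_def dcone_def
    by (auto; force simp: less_le)
  then show ?thesis using assms by simp
qed

lemma dcone_dcone_pos: "A \<noteq> {} \<Longrightarrow> dcone (dcone_pos A) = dcone A"
  unfolding dcone_pos_def dcone_def
  apply auto
   apply (metis mult_nonneg_nonneg less_imp_le scaleR_scaleR)
  apply (metis less_le scaleR_one scaleR_zero_left zero_less_one)
  done

lemma mem_opval[simp]: "xs \<in> opval T x \<longleftrightarrow> (x, xs) \<in> T"
  unfolding opval_def by simp

lemma mem_opdom: "x \<in> opdom T \<longleftrightarrow> (\<exists>xs. (x, xs) \<in> T)"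
  unfolding opdom_def opval_def by auto

lemma mem_zeros: "x \<in> zeros T \<longleftrightarrow> (x, 0) \<in> T"
  unfolding zeros_def opval_def by auto

lemma mem_polarD: "(x, xs) \<in> pm_polar_D T \<longleftrightarrow> (\<forall>q\<in>T. psim (x, xs) q) \<and> x \<in> opdom T"
  unfolding pm_polar_D_def pm_polar_def by auto

lemma polar_scale: "(x, xs) \<in> pm_polar T \<Longrightarrow> t > 0 \<Longrightarrow> (x, t *\<^sub>R xs) \<in> pm_polar T"
  unfolding pm_polar_def using psim_scale1 by fast

lemma mem_dcone_pos: "xs \<in> dcone_pos A \<longleftrightarrow> (\<exists>t v. t > 0 \<and> v \<in> A \<and> xs = t *\<^sub>R v)"
  unfolding dcone_pos_def by auto

lemma mem_That: "(x, xs) \<in> That T \<longleftrightarrow>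
     (x \<in> zeros T \<and> xs \<in> normal_cone (Lset T x) x) \<or>
     (x \<in> opdom T - zeros T \<and> xs \<in> dcone_pos (opval T x))"
  unfolding That_def by simp

theorem mainTheorem16:
  fixes T :: "('a::banach \<times> ('a \<Rightarrow>\<^sub>L real)) set"
  assumes "pre_maximal_pm T"
  shows "D_maximal_pm T \<longleftrightarrow> That T = pm_polar_D T"
proof -
  have pmT: "pseudomonotone T" and pmP: "pseudomonotone (pm_polar T)"
    using assms unfolding pre_maximal_pm_def by auto
  have TsubP: "T \<subseteq> pm_polar_D T" using pm_subset_polarD[OF pmT] .
  have pmPD: "pseudomonotone (pm_polar_D T)"
    by (rule pm_mono[OF pmP]) (auto simp: pm_polar_D_def)
  have zdom: "zeros T \<subseteq> opdom T" by (auto simp: mem_zeros mem_opdom)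
  show ?thesis
  proof
    assume "D_maximal_pm T"
    then obtain S where pmS: "pseudomonotone S" and eqv: "op_equiv T S"
      and maxS: "\<not> (\<exists>S'. pseudomonotone S' \<and> S \<subset> S' \<and> opdom S' = opdom S)"
      unfolding D_maximal_pm_def by blast
    have domS: "opdom S = opdom T" and zS: "zeros S = zeros T"
      using eqv unfolding op_equiv_def by auto
    have cones: "dcone_pos (opval T x) = dcone_pos (opval S x)" if "x \<in> opdom T - zeros T" for x
      apply (rule dcone_pos_eq)
      using eqv that zS unfolding op_equiv_def by (auto simp: mem_zeros)
    have S_polar: "(x, xs) \<in> S" if "(x, xs) \<in> pm_polar_D S" for x xs
    proof (rule ccontr)
      assume nin: "(x, xs) \<notin> S"
      have "pseudomonotone (insert (x, xs) S)"
        using pm_insert[OF pmS] that by (auto simp: mem_polarD)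
      moreover have "S \<subset> insert (x, xs) S" using nin by auto
      moreover have "opdom (insert (x, xs) S) = opdom S"
        using that by (auto simp: mem_polarD mem_opdom)
      ultimately show False using maxS by blast
    qed
    have S_sub: "S \<subseteq> pm_polar T"
    proof
      fix p assume pS: "p \<in> S"
      obtain y ys where p: "p = (y, ys)" by (cases p)
      have "psim (y, ys) (z, zs)" if zT: "(z, zs) \<in> T" for z zs
      proof (cases "z \<in> zeros T")
        case False
        have zd: "z \<in> opdom T - zeros T" using False zT by (auto simp: mem_opdom)
        have "zs \<in> dcone_pos (opval T z)" unfolding mem_dcone_pos
          using zT by (intro exI[of _ 1]) auto
        then have "zs \<in> dcone_pos (opval S z)" using cones[OF zd] by simp
        then obtain t w where "t > 0" "(z, w) \<in> S" "zs = t *\<^sub>R w"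
          unfolding mem_dcone_pos by auto
        then show ?thesis using psim_scale2 pm_psim[OF pmS] pS p by blast
      next
        case zz: True
        show ?thesis
        proof (cases "y \<in> zeros T")
          case False
          have yd: "y \<in> opdom T - zeros T" using False pS p domS by (auto simp: mem_opdom)
          have "ys \<in> dcone_pos (opval S y)" unfolding mem_dcone_pos
            using pS p by (intro exI[of _ 1]) auto
          then have "ys \<in> dcone_pos (opval T y)" using cones[OF yd] by simp
          then obtain t u where "t > 0" "(y, u) \<in> T" "ys = t *\<^sub>R u"
            unfolding mem_dcone_pos by auto
          then show ?thesis using psim_scale1 pm_psim[OF pmT] zT by blast
        next
          case True
          have y0: "(y, 0) \<in> T" using True by (simp add: mem_zeros)
          have z0: "(z, 0) \<in> S" using zz zS mem_zeros by metis
          have 1: "0 \<le> zs (z - y)" using pmT y0 zT unfolding pseudomonotone_def by fastforce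
          have 2: "0 \<le> ys (y - z)" using pmS z0 pS p unfolding pseudomonotone_def by fastforce
          show ?thesis using 1 2 unfolding psim_iff neg_sw[of zs z y] neg_sw[of ys z y] by linarith
        qed
      qed
      then show "p \<in> pm_polar T" unfolding pm_polar_def p by auto
    qed
    have S_sub2: "S \<subseteq> pm_polar_D T"
      using S_sub domS unfolding pm_polar_D_def by (auto simp: mem_opdom)
    have PD_sub: "pm_polar_D T \<subseteq> S"
    proof
      fix p assume pP: "p \<in> pm_polar_D T"
      obtain x xs where p: "p = (x, xs)" by (cases p)
      have "(x, xs) \<in> pm_polar_D S"
        unfolding mem_polarD
      proof
        show "\<forall>q\<in>S. psim (x, xs) q"
        proof
          fix q assume "q \<in> S"
          then have "q \<in> pm_polar T" using S_sub by auto
          moreover have "(x, xs) \<in> pm_polar T" using pP p by (auto simp: pm_polar_D_def)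
          ultimately show "psim (x, xs) q" using pm_psim[OF pmP] by (cases q) auto
        qed
        show "x \<in> opdom S" using pP p domS by (auto simp: pm_polar_D_def)
      qed
      then show "p \<in> S" using S_polar p by auto
    qed
    have PDS: "pm_polar_D T = S" using S_sub2 PD_sub by auto
    show "That T = pm_polar_D T"
    proof
      show "That T \<subseteq> pm_polar_D T"
      proof
        fix p assume pH: "p \<in> That T"
        obtain x xs where p: "p = (x, xs)" by (cases p)
        show "p \<in> pm_polar_D T"
        proof (cases "x \<in> zeros T")
          case True
          then have nc: "xs \<in> normal_cone (Lset T x) x" using pH p by (auto simp: mem_That)
          have x0: "(x, 0) \<in> T" using True by (simp add: mem_zeros)
          have "psim (x, xs) (y, ys)" if yT: "(y, ys) \<in> T" for y ys
          proof -
            have 1: "0 \<le> ys (y - x)" using pmT x0 yT unfolding pseudomonotone_def by fastforce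
            have 2: "xs (y - x) \<le> 0" if "ys (x - y) = 0"
            proof -
              have "y \<in> Lset T x" unfolding Lset_def using yT that by (auto intro!: bexI[of _ ys])
              then show ?thesis using nc unfolding normal_cone_def by auto
            qed
            show ?thesis using 1 2 unfolding psim_iff neg_sw[of ys y x] by force
          qed
          then show ?thesis using True zdom p by (auto simp: mem_polarD)
        next
          case False
          then obtain t v where tv: "t > 0" "(x, v) \<in> T" "xs = t *\<^sub>R v"
            using pH p by (auto simp: mem_That mem_dcone_pos)
          then have "(x, v) \<in> pm_polar T" using TsubP by (auto simp: pm_polar_D_def)
          then have "(x, xs) \<in> pm_polar T" using polar_scale tv by blast
          then show ?thesis using p tv by (auto simp: pm_polar_D_def mem_opdom)
        qed
      qed
      show "pm_polar_D T \<subseteq> That T"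
      proof
        fix p assume pP: "p \<in> pm_polar_D T"
        obtain x xs where p: "p = (x, xs)" by (cases p)
        have xd: "x \<in> opdom T" using pP p by (auto simp: pm_polar_D_def)
        show "p \<in> That T"
        proof (cases "x \<in> zeros T")
          case True
          have "xs \<in> normal_cone (Lset T x) x"
            unfolding normal_cone_def
          proof (intro CollectI ballI)
            fix y assume "y \<in> Lset T x"
            then obtain ys where yT: "(y, ys) \<in> T" and g: "ys (x - y) \<ge> 0"
              unfolding Lset_def by auto
            have "psim (x, xs) (y, ys)" using pP p yT by (auto simp: mem_polarD)
            then show "xs (y - x) \<le> 0" using g unfolding psim_iff by linarith
          qed
          then show ?thesis using True p by (auto simp: mem_That)
        next
          case False
          have "(x, xs) \<in> S" using pP p PDS by auto
          then have "xs \<in> dcone_pos (opval S x)" unfolding mem_dcone_pos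
            by (intro exI[of _ 1]) auto
          then have "xs \<in> dcone_pos (opval T x)" using cones[of x] False xd by auto
          then show ?thesis using False xd p by (auto simp: mem_That)
        qed
      qed
    qed
  next
    assume eq: "That T = pm_polar_D T"
    define S where "S = pm_polar_D T"
    have domS: "opdom S = opdom T"
      using TsubP unfolding S_def by (auto simp: pm_polar_D_def mem_opdom; blast)
    have zS: "zeros S = zeros T"
    proof
      show "zeros T \<subseteq> zeros S" using TsubP unfolding S_def by (auto simp: mem_zeros)
      show "zeros S \<subseteq> zeros T"
      proof
        fix x assume "x \<in> zeros S"
        then have "(x, 0) \<in> That T" using eq unfolding S_def by (simp add: mem_zeros)
        then show "x \<in> zeros T"
          by (auto simp: mem_That mem_dcone_pos mem_zeros)
      qed
    qed
    have cn: "dcone (opval T x) = dcone (opval S x)" if xd: "x \<in> opdom T - zeros T" for x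
    proof -
      have "opval S x = dcone_pos (opval T x)"
        using xd unfolding S_def eq[symmetric] by (intro set_eqI) (auto simp: mem_That)
      moreover have "opval T x \<noteq> {}" using xd by (auto simp: mem_opdom)
      ultimately show ?thesis using dcone_dcone_pos by metis
    qed
    have "op_equiv T S" unfolding op_equiv_def using domS zS cn by auto
    moreover have pmS: "pseudomonotone S" using pmPD unfolding S_def .
    moreover have "\<not> (\<exists>S'. pseudomonotone S' \<and> S \<subset> S' \<and> opdom S' = opdom S)"
    proof
      assume "\<exists>S'. pseudomonotone S' \<and> S \<subset> S' \<and> opdom S' = opdom S"
      then obtain S' where pm': "pseudomonotone S'" and sub: "S \<subset> S'" and d': "opdom S' = opdom S"
        by blast
      then obtain x xs where xin: "(x, xs) \<in> S'" "(x, xs) \<notin> S" by auto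
      have "x \<in> opdom T" using xin d' domS by (auto simp: mem_opdom)
      moreover have "\<forall>q\<in>T. psim (x, xs) q"
      proof
        fix q assume "q \<in> T"
        then have "q \<in> S'" using TsubP sub unfolding S_def by auto
        then show "psim (x, xs) q" using pm_psim[OF pm'] xin by (cases q) auto
      qed
      ultimately have "(x, xs) \<in> S" unfolding S_def by (simp add: mem_polarD)
      then show False using xin by auto
    qed
    ultimately show "D_maximal_pm T" unfolding D_maximal_pm_def using pmT by blast
  qed
qed

end
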